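(* In the isotropic setting below, let $F,F_p\in\mathrm{GL}^+(3)$, $C_p=F_p^TF_p$, $U_p=\sqrt{C_p}$, $R_p=F_pU_p^{-1}\in\mathrm{SO}(3)$. Then $$\mathring\Sigma=R_p^T\Sigma_eR_p=U_p^{-1}\widetilde\Sigma\,U_p,\qquad \widetilde\Sigma=U_p\mathring\Sigma\,U_p^{-1},\qquad \|\mathrm{dev}_3\mathring\Sigma\|=\|\mathrm{dev}_3\Sigma_e\|,$$ and $$\mathrm{tr}\big[(\mathrm{dev}_3\widetilde\Sigma)^2\big]=\|\mathrm{dev}_3(U_p^{-1}\widetilde\Sigma U_p)\|^2=\|\mathrm{dev}_3\mathring\Sigma\|^2\ge0.$$ In particular $\sqrt{\mathrm{tr}[(\mathrm{dev}_3\widetilde\Sigma)^2]}=\|\mathrm{dev}_3\Sigma_e\|=\|\mathrm{dev}_3\tau_e\|$ is well defined.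
   Context: $W:\mathrm{GL}^+(3)\to\mathbb{R}$ objective and isotropic ($W(QFR)=W(F)$, $Q,R\in\mathrm{SO}(3)$), written $W(F_e)=\Psi(I_1(C_e),I_2(C_e),I_3(C_e))$ with $\Psi\in C^1$; $\widetilde W(X)=\Psi(\mathrm{tr}X,\mathrm{tr}(\mathrm{Cof}X),\det X)$. $F_e=FF_p^{-1}$, $C=F^TF$, $C_e=F_e^TF_e$. $\langle X,Y\rangle=\mathrm{tr}(XY^T)$, $\|\cdot\|$ Frobenius norm, $D$ gradient, $\mathrm{dev}_3X=X-\frac13\mathrm{tr}(X)\mathbb{1}$, $\mathrm{sym}X=\frac12(X+X^T)$. $\Sigma_e=F_e^TDW(F_e)$, $\tau_e=DW(F_e)F_e^T$ (symmetric for isotropic $W$). $\widetilde\Sigma:=2\,C\,D\widetilde W(CC_p^{-1})\,C_p^{-1}$. Grandi–Stefanelli stress: $\mathring\Sigma:=2\,U_p^{-1}\,\mathrm{sym}\big[C\,D\widetilde W(CC_p^{-1})\big]\,U_p^{-1}\in\mathrm{Sym}(3)$. *)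

theory Defs
  imports "HOL-Analysis.Analysis"
begin

type_synonym mat3 = "real^3^3"

text \<open>Cofactor matrix: (Cof X)_ij = det of X with row i and column j replaced by
  the unit vectors e_j resp. e_i (i.e. the signed (i,j)-minor).\<close>
definition Cof :: "mat3 \<Rightarrow> mat3" where
  "Cof X = (\<chi> i j. det (\<chi> k l. if k = i \<and> l = j then 1
                                  else if k = i \<or> l = j then 0 else X $ k $ l))"

definition I1 :: "mat3 \<Rightarrow> real" where "I1 X = trace X"
definition I2 :: "mat3 \<Rightarrow> real" where "I2 X = trace (Cof X)"
definition I3 :: "mat3 \<Rightarrow> real" where "I3 X = det X"

text \<open>Gradient w.r.t. the Frobenius inner product (which is the inner product
  of real^3^3): the matrix G with DW(X)[H] = <G, H>.\<close>
definition grad :: "(mat3 \<Rightarrow> real) \<Rightarrow> mat3 \<Rightarrow> mat3" where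
  "grad f X = (THE G. (f has_derivative (\<lambda>H. G \<bullet> H)) (at X))"

definition sym :: "mat3 \<Rightarrow> mat3" where
  "sym X = (1/2) *\<^sub>R (X + transpose X)"

definition dev3 :: "mat3 \<Rightarrow> mat3" where
  "dev3 X = X - (trace X / 3) *\<^sub>R mat 1"

definition SO3 :: "mat3 set" where
  "SO3 = {Q. orthogonal_matrix Q \<and> det Q = 1}"

definition C1_on :: "(real \<times> real \<times> real) set \<Rightarrow> (real \<times> real \<times> real \<Rightarrow> real) \<Rightarrow> bool" where
  "C1_on S f \<longleftrightarrow> (\<exists>f'. (\<forall>x\<in>S. (f has_derivative blinfun_apply (f' x)) (at x))
                       \<and> continuous_on S f')"

text \<open>Natural domain of \<Psi>: invariants of positive definite tensors.\<close>
definition posoct :: "(real \<times> real \<times> real) set" where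
  "posoct = {(a,b,c). a > 0 \<and> b > 0 \<and> c > 0}"

definition Wtilde :: "(real \<times> real \<times> real \<Rightarrow> real) \<Rightarrow> mat3 \<Rightarrow> real" where
  "Wtilde \<Psi> X = \<Psi> (trace X, trace (Cof X), det X)"

end

theory Submission
  imports Defs
begin



lemma inv_r: fixes A :: mat3 assumes "det A \<noteq> 0" shows "A ** matrix_inv A = mat 1"
proof -
  have "invertible A" using assms invertible_det_nz by blast
  then show ?thesis unfolding invertible_def matrix_inv_def by (rule someI2_ex) auto
qed
lemma inv_l: fixes A :: mat3 assumes "det A \<noteq> 0" shows "matrix_inv A ** A = mat 1"
proof -
  have "invertible A" using assms invertible_det_nz by blast
  then show ?thesis unfolding invertible_def matrix_inv_def by (rule someI2_ex) auto
qed
lemma inv_unique: fixes A B :: mat3 assumes "B ** A = mat 1" shows "matrix_inv A = B"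
proof -
  have "det B * det A = 1" using assms det_mul[of B A] by simp
  then have d: "det A \<noteq> 0" by auto
  have "matrix_inv A = (B ** A) ** matrix_inv A" using assms by simp
  also have "\<dots> = B" by (simp add: matrix_mul_assoc[symmetric] inv_r[OF d])
  finally show ?thesis .
qed
lemma det_inv: fixes A :: mat3 assumes "det A \<noteq> 0" shows "det (matrix_inv A) = 1 / det A"
  using det_mul[of A "matrix_inv A"] inv_r[OF assms] assms by (simp add: field_simps)
lemma inv_mult: fixes A B :: mat3 assumes "det A \<noteq> 0" "det B \<noteq> 0"
  shows "matrix_inv (A ** B) = matrix_inv B ** matrix_inv A"
  apply (rule inv_unique)
  by (metis assms inv_l matrix_mul_assoc matrix_mul_lid)
lemma inv_transpose: fixes A :: mat3 assumes "det A \<noteq> 0"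
  shows "matrix_inv (transpose A) = transpose (matrix_inv A)"
  apply (rule inv_unique)
  by (metis assms inv_r matrix_transpose_mul transpose_mat)
lemma inv_inv: fixes A :: mat3 assumes "det A \<noteq> 0" shows "matrix_inv (matrix_inv A) = A"
  by (rule inv_unique) (rule inv_r[OF assms])
lemma inv_nz: fixes A :: mat3 assumes "det A \<noteq> 0" shows "det (matrix_inv A) \<noteq> 0"
  using det_inv[OF assms] assms by simp

lemma Cof_comp: fixes X :: mat3 shows
  "Cof X $ 1 $ 1 = X$2$2*X$3$3 - X$2$3*X$3$2"
  "Cof X $ 1 $ 2 = X$2$3*X$3$1 - X$2$1*X$3$3"
  "Cof X $ 1 $ 3 = X$2$1*X$3$2 - X$2$2*X$3$1"
  "Cof X $ 2 $ 1 = X$1$3*X$3$2 - X$1$2*X$3$3"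
  "Cof X $ 2 $ 2 = X$1$1*X$3$3 - X$1$3*X$3$1"
  "Cof X $ 2 $ 3 = X$1$2*X$3$1 - X$1$1*X$3$2"
  "Cof X $ 3 $ 1 = X$1$2*X$2$3 - X$1$3*X$2$2"
  "Cof X $ 3 $ 2 = X$1$3*X$2$1 - X$1$1*X$2$3"
  "Cof X $ 3 $ 3 = X$1$1*X$2$2 - X$1$2*X$2$1"
  by (simp_all add: Cof_def det_3)


lemmas mexp = vec_eq_iff forall_3 matrix_matrix_mult_def sum_3 mat_def transpose_def Cof_comp det_3 inner_vec_def trace_def

lemma sc_l: fixes A B :: mat3 shows "(k *\<^sub>R A) ** B = k *\<^sub>R (A ** B)"
  by (simp add: matrix_matrix_mult_def vec_eq_iff sum_distrib_left algebra_simps)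
lemma sc_r: fixes A B :: mat3 shows "A ** (k *\<^sub>R B) = k *\<^sub>R (A ** B)"
  by (simp add: matrix_matrix_mult_def vec_eq_iff sum_distrib_left algebra_simps)
lemma tr_add: fixes A B :: mat3 shows "transpose (A + B) = transpose A + transpose B"
  by (simp add: transpose_def vec_eq_iff)
lemma tr_diff: fixes A B :: mat3 shows "transpose (A - B) = transpose A - transpose B"
  by (simp add: transpose_def vec_eq_iff)
lemma trace_sc: fixes A :: mat3 shows "trace (k *\<^sub>R A) = k * trace A"
  by (simp add: trace_def sum_distrib_left)
lemma trace_transpose: fixes A :: mat3 shows "trace (transpose A) = trace A"
  by (simp add: trace_def transpose_def)

lemma adj: fixes X :: mat3 shows "X ** transpose (Cof X) = det X *\<^sub>R mat 1"
  by (simp add: mexp algebra_simps)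
lemma adj2: fixes X :: mat3 shows "transpose (Cof X) ** X = det X *\<^sub>R mat 1"
  by (simp add: mexp algebra_simps)
lemma Cof_transpose: fixes X :: mat3 shows "Cof (transpose X) = transpose (Cof X)"
  by (simp add: mexp algebra_simps)
lemma trace_Cof: fixes X :: mat3 shows "trace (Cof X) = ((trace X)^2 - trace (X ** X)) / 2"
  by (simp add: mexp algebra_simps power2_eq_square)
lemma inner_trace: fixes A B :: mat3 shows "A \<bullet> B = trace (A ** transpose B)"
  by (simp add: mexp algebra_simps)
lemma norm_trace: fixes A :: mat3 shows "(norm A)^2 = trace (A ** transpose A)"
  by (simp add: power2_norm_eq_inner inner_trace)
lemma Cof_inv: fixes X :: mat3 assumes "det X \<noteq> 0"
  shows "Cof X = det X *\<^sub>R transpose (matrix_inv X)"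
proof -
  have "matrix_inv X = (1 / det X) *\<^sub>R transpose (Cof X)"
    apply (rule inv_unique) using adj2[of X] assms by (simp add: sc_l)
  then show ?thesis using assms by (simp add: transpose_scalar)
qed




lemma comp_deriv: "((\<lambda>X::mat3. X$i$j) has_derivative (\<lambda>H. H$i$j)) F"
  by (rule bounded_linear.has_derivative[OF bounded_linear_compose[OF bounded_linear_vec_nth bounded_linear_vec_nth]]) (rule has_derivative_ident)

lemma det_fun: "det = (\<lambda>A::mat3. A$1$1 * A$2$2 * A$3$3 +
    A$1$2 * A$2$3 * A$3$1 + A$1$3 * A$2$1 * A$3$2 -
    A$1$1 * A$2$3 * A$3$2 - A$1$2 * A$2$1 * A$3$3 - A$1$3 * A$2$2 * A$3$1)"
  by (rule ext) (rule det_3)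

lemma det_deriv: "((\<lambda>X::mat3. det X) has_derivative (\<lambda>H. Cof X \<bullet> H)) (at X)"
  unfolding det_fun
  apply (rule comp_deriv derivative_eq_intros refl)+
  apply (rule ext) apply (simp add: mexp algebra_simps)
  done

lemma I2_fun: "(\<lambda>X::mat3. trace (Cof X)) = (\<lambda>X. X$1$1*X$2$2 - X$1$2*X$2$1 + X$1$1*X$3$3 - X$1$3*X$3$1 + X$2$2*X$3$3 - X$2$3*X$3$2)"
  by (rule ext) (simp add: mexp algebra_simps)

lemma I2_deriv: "((\<lambda>X::mat3. trace (Cof X)) has_derivative (\<lambda>H. (trace X *\<^sub>R mat 1 - transpose X) \<bullet> H)) (at X)"
  unfolding I2_fun
  apply (rule comp_deriv derivative_eq_intros refl)+
  apply (rule ext) apply (simp add: mexp algebra_simps)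
  done

lemma tr_fun: "(\<lambda>X::mat3. trace X) = (\<lambda>X. X$1$1 + X$2$2 + X$3$3)"
  by (rule ext) (simp add: mexp)

lemma tr_deriv: "((\<lambda>X::mat3. trace X) has_derivative (\<lambda>H. mat 1 \<bullet> H)) (at X)"
  unfolding tr_fun
  apply (rule comp_deriv derivative_eq_intros refl)+
  apply (rule ext) apply (simp add: mexp algebra_simps)
  done




definition Gt :: "(real \<times> real \<times> real \<Rightarrow> (real \<times> real \<times> real) \<Rightarrow>\<^sub>L real) \<Rightarrow> mat3 \<Rightarrow> mat3" where
  "Gt f' X = (let L = blinfun_apply (f' (trace X, trace (Cof X), det X)) in
     L (1,0,0) *\<^sub>R mat 1 + L (0,1,0) *\<^sub>R (trace X *\<^sub>R mat 1 - transpose X) + L (0,0,1) *\<^sub>R Cof X)"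

lemma blin3: fixes L :: "(real \<times> real \<times> real) \<Rightarrow>\<^sub>L real" and a b c :: real shows "blinfun_apply L (a,b,c) = a * blinfun_apply L (1,0,0) + b * blinfun_apply L (0,1,0) + c * blinfun_apply L (0,0,1)"
proof -
  have e: "(a,b,c) = a *\<^sub>R (1,0,0) + b *\<^sub>R (0,1,0) + c *\<^sub>R ((0::real),(0::real),(1::real))" by simp
  have "blinfun_apply L (a,b,c) = blinfun_apply L (a *\<^sub>R (1,0,0) + b *\<^sub>R (0,1,0) + c *\<^sub>R ((0::real),(0::real),(1::real)))"
    using e by (rule arg_cong)
  also have "\<dots> = a *\<^sub>R blinfun_apply L (1,0,0) + b *\<^sub>R blinfun_apply L (0,1,0) + c *\<^sub>R blinfun_apply L (0,0,1)"
    by (simp only: blinfun.add_right blinfun.scaleR_right)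
  finally show ?thesis by simp
qed

lemma Wt_deriv:
  assumes d: "\<forall>x\<in>posoct. (\<Psi> has_derivative blinfun_apply (f' x)) (at x)"
    and p: "(trace X, trace (Cof X), det X) \<in> posoct"
  shows "(Wtilde \<Psi> has_derivative (\<lambda>H. Gt f' X \<bullet> H)) (at X)"
proof -
  have i: "((\<lambda>X::mat3. (trace X, trace (Cof X), det X)) has_derivative
     (\<lambda>H. (mat 1 \<bullet> H, (trace X *\<^sub>R mat 1 - transpose X) \<bullet> H, Cof X \<bullet> H))) (at X)"
    by (intro has_derivative_Pair tr_deriv I2_deriv det_deriv)
  have "((\<Psi> \<circ> (\<lambda>X::mat3. (trace X, trace (Cof X), det X))) has_derivative
      (blinfun_apply (f' (trace X, trace (Cof X), det X)) \<circ> (\<lambda>H. (mat 1 \<bullet> H, (trace X *\<^sub>R mat 1 - transpose X) \<bullet> H, Cof X \<bullet> H)))) (at X)"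
    unfolding comp_def by (rule has_derivative_compose[OF i]) (use d p in auto)
  moreover have "Wtilde \<Psi> = \<Psi> \<circ> (\<lambda>X::mat3. (trace X, trace (Cof X), det X))"
    by (rule ext) (simp add: Wtilde_def)
  moreover have "(blinfun_apply (f' (trace X, trace (Cof X), det X)) \<circ> (\<lambda>H. (mat 1 \<bullet> H, (trace X *\<^sub>R mat 1 - transpose X) \<bullet> H, Cof X \<bullet> H)))
     = (\<lambda>H. Gt f' X \<bullet> H)"
    apply (rule ext)
    apply (subst comp_apply)
    apply (subst blin3)
    by (simp add: Gt_def Let_def inner_add_left algebra_simps)
  ultimately show ?thesis by simp
qed

lemma grad_eq: assumes "(f has_derivative (\<lambda>H. G \<bullet> H)) (at X)" shows "grad f X = G"
  unfolding grad_def
proof (rule the_equality)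
  show "(f has_derivative (\<lambda>H. G \<bullet> H)) (at X)" by (rule assms)
  fix G' assume "(f has_derivative (\<lambda>H. G' \<bullet> H)) (at X)"
  from has_derivative_unique[OF this assms] have "\<And>H. G' \<bullet> H = G \<bullet> H" by metis
  from this[of "G' - G"] have "(G' - G) \<bullet> (G' - G) = 0" by (simp add: inner_diff_left inner_commute)
  then show "G' = G" by simp
qed

lemma radd: fixes A B C :: mat3 shows "(A + B) ** C = A ** C + B ** C"
  by (simp add: matrix_matrix_mult_def vec_eq_iff sum.distrib algebra_simps)
lemma ldiff: fixes A B C :: mat3 shows "A ** (B - C) = A ** B - A ** C"
  by (simp add: matrix_matrix_mult_def vec_eq_iff sum_subtractf algebra_simps)
lemma rdiff: fixes A B C :: mat3 shows "(A - B) ** C = A ** C - B ** C"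
  by (simp add: matrix_matrix_mult_def vec_eq_iff sum_subtractf algebra_simps)

lemma bil: "bounded_bilinear (\<lambda>(A::mat3) (B::mat3). A ** B)"
  unfolding bilinear_conv_bounded_bilinear[symmetric] bilinear_def
  by (auto simp: linear_iff matrix_add_ldistrib radd sc_l sc_r)

lemma tr_bl: "bounded_linear (transpose :: mat3 \<Rightarrow> mat3)"
  by (rule bounded_linearI') (simp_all add: tr_add transpose_scalar)

lemma CtC_deriv: "((\<lambda>F::mat3. transpose F ** F) has_derivative (\<lambda>H. transpose F ** H + transpose H ** F)) (at F)"
  by (rule bounded_bilinear.FDERIV[OF bil bounded_linear.has_derivative[OF tr_bl has_derivative_ident] has_derivative_ident])

lemma inner_aux1: fixes G F H :: mat3 shows "G \<bullet> (transpose F ** H) = (F ** G) \<bullet> H"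
  by (simp add: mexp algebra_simps)
lemma inner_aux2: fixes G F H :: mat3 shows "G \<bullet> (transpose H ** F) = (F ** transpose G) \<bullet> H"
  by (simp add: mexp algebra_simps)

lemma det_cont: "continuous_on UNIV (det :: mat3 \<Rightarrow> real)"
  using det_deriv has_derivative_continuous continuous_at_imp_continuous_on by blast




lemma cancel1: fixes A B :: mat3 assumes "det A \<noteq> 0" shows "A ** (matrix_inv A ** B) = B"
  by (simp add: matrix_mul_assoc inv_r[OF assms])
lemma cancel2: fixes A B :: mat3 assumes "det A \<noteq> 0" shows "matrix_inv A ** (A ** B) = B"
  by (simp add: matrix_mul_assoc inv_l[OF assms])

lemma trace_sim: fixes P A :: mat3 assumes "det P \<noteq> 0" shows "trace (P ** A ** matrix_inv P) = trace A"
  by (metis assms inv_l matrix_mul_assoc matrix_mul_rid trace_mul_sym)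

lemma sq_sim: fixes P A :: mat3 assumes "det P \<noteq> 0"
  shows "(P ** A ** matrix_inv P) ** (P ** A ** matrix_inv P) = P ** (A ** A) ** matrix_inv P"
  by (simp add: matrix_mul_assoc[symmetric] cancel2[OF assms])

lemma det_sim: fixes P A :: mat3 assumes "det P \<noteq> 0" shows "det (P ** A ** matrix_inv P) = det A"
  using assms by (simp add: det_mul det_inv)

lemma inv_sim: fixes P A :: mat3 assumes "det P \<noteq> 0"
  shows "(trace (P ** A ** matrix_inv P), trace (Cof (P ** A ** matrix_inv P)), det (P ** A ** matrix_inv P))
       = (trace A, trace (Cof A), det A)"
  by (simp add: trace_Cof trace_sim sq_sim det_sim assms)

lemma Gt_sim: fixes P Y :: mat3 assumes P: "det P \<noteq> 0" and Y: "det Y \<noteq> 0"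
  shows "Gt f' (P ** Y ** matrix_inv P) = transpose (matrix_inv P) ** Gt f' Y ** transpose P"
proof -
  define X where "X = P ** Y ** matrix_inv P"
  have dX: "det X = det Y" unfolding X_def by (rule det_sim[OF P])
  have iX: "(trace X, trace (Cof X), det X) = (trace Y, trace (Cof Y), det Y)"
    unfolding X_def by (rule inv_sim[OF P])
  have tX: "transpose X = transpose (matrix_inv P) ** transpose Y ** transpose P"
    unfolding X_def by (simp add: matrix_transpose_mul matrix_mul_assoc)
  have invX: "matrix_inv X = P ** matrix_inv Y ** matrix_inv P"
    unfolding X_def using P Y
    by (simp add: inv_mult det_mul inv_nz inv_inv matrix_mul_assoc)
  have cX: "Cof X = transpose (matrix_inv P) ** Cof Y ** transpose P"
    using Cof_inv[of X] Cof_inv[OF Y] dX Y invX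
    by (simp add: matrix_transpose_mul matrix_mul_assoc sc_l sc_r)
  have I: "transpose (matrix_inv P) ** mat 1 ** transpose P = mat 1"
    by (metis P inv_r matrix_mul_rid matrix_transpose_mul transpose_mat)
  show ?thesis
    unfolding X_def[symmetric] Gt_def Let_def iX
    using iX I by (simp add: tX cX matrix_add_ldistrib radd ldiff rdiff sc_l sc_r)
qed

lemma Gt_sym: fixes Y :: mat3 assumes "transpose Y = Y" shows "transpose (Gt f' Y) = Gt f' Y"
  using assms Cof_transpose[of Y]
  by (simp add: Gt_def Let_def tr_add tr_diff transpose_scalar)

lemma YGt: fixes Y :: mat3 assumes "transpose Y = Y" shows "transpose (Y ** Gt f' Y) = Y ** Gt f' Y"
proof -
  have c: "Y ** Cof Y = det Y *\<^sub>R mat 1"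
    using adj[of Y] Cof_transpose[of Y] assms by simp
  have "Y ** Gt f' Y = blinfun_apply (f' (trace Y, trace (Cof Y), det Y)) (1,0,0) *\<^sub>R Y
     + blinfun_apply (f' (trace Y, trace (Cof Y), det Y)) (0,1,0) *\<^sub>R (trace Y *\<^sub>R Y - Y ** Y)
     + blinfun_apply (f' (trace Y, trace (Cof Y), det Y)) (0,0,1) *\<^sub>R (det Y *\<^sub>R mat 1)"
    unfolding Gt_def Let_def using assms
    by (simp add: matrix_add_ldistrib ldiff sc_r c)
  then show ?thesis using assms
    by (simp add: tr_add tr_diff transpose_scalar matrix_transpose_mul)
qed

lemma dev_tr: fixes A :: mat3 shows "trace (dev3 A ** dev3 A) = trace (A ** A) - (trace A)^2 / 3"
  by (simp add: mexp dev3_def algebra_simps power2_eq_square)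
lemma dev_sym: fixes A :: mat3 shows "transpose (dev3 A) = dev3 (transpose A)"
  by (simp add: dev3_def tr_diff transpose_scalar trace_transpose)
lemma dev_norm: fixes A :: mat3 assumes "transpose A = A"
  shows "(norm (dev3 A))^2 = trace (A ** A) - (trace A)^2 / 3"
  using norm_trace[of "dev3 A"] dev_sym[of A] assms dev_tr[of A] by simp

lemma posoct_Ce: fixes Fe :: mat3 assumes d: "det Fe \<noteq> 0"
  shows "(trace (transpose Fe ** Fe), trace (Cof (transpose Fe ** Fe)), det (transpose Fe ** Fe)) \<in> posoct"
proof -
  have "transpose Fe \<noteq> 0" using d by (metis det_0 det_transpose mat_0)
  then have t: "trace (transpose Fe ** Fe) > 0" using norm_trace[of "transpose Fe"]
    by (metis transpose_transpose zero_less_norm_iff zero_less_power)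
  have "Cof Fe \<noteq> 0" using adj[of Fe] d
    by (metis matrix_mul_rid mat_0 det_0 det_I  times0_right transpose_mat zero_neq_one scaleR_eq_0_iff
        transpose_iff)
  then have nz: "transpose (Cof Fe) \<noteq> 0" by (metis transpose_iff transpose_mat mat_0)
  have dt: "det (transpose Fe) \<noteq> 0" using d by simp
  have "Cof (transpose Fe ** Fe) = transpose (Cof Fe) ** Cof Fe"
    using Cof_inv[of "transpose Fe ** Fe"] Cof_inv[OF d] d dt
    by (simp add: det_mul inv_mult inv_transpose matrix_transpose_mul sc_l sc_r power2_eq_square transpose_scalar)
  then have c: "trace (Cof (transpose Fe ** Fe)) > 0" using norm_trace[of "transpose (Cof Fe)"] nz
    by (metis transpose_transpose zero_less_norm_iff zero_less_power)
  have "det (transpose Fe ** Fe) > 0" using d by (auto simp add: det_mul zero_less_mult_iff linorder_neq_iff)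
  with t c show ?thesis by (simp add: posoct_def)
qed




lemma W_grad:
  assumes d: "\<forall>x\<in>posoct. (\<Psi> has_derivative blinfun_apply (f' x)) (at x)"
    and WP: "\<And>Fe. det Fe > 0 \<Longrightarrow> W Fe = Wtilde \<Psi> (transpose Fe ** Fe)"
    and pos: "det Fe > 0"
  shows "grad W Fe = 2 *\<^sub>R (Fe ** Gt f' (transpose Fe ** Fe))"
proof -
  define Ce where "Ce = transpose Fe ** Fe"
  have p: "(trace Ce, trace (Cof Ce), det Ce) \<in> posoct" unfolding Ce_def
    by (rule posoct_Ce) (use pos in simp)
  have s: "transpose (Gt f' Ce) = Gt f' Ce"
    by (rule Gt_sym) (simp add: Ce_def matrix_transpose_mul)
  have "((\<lambda>F. Wtilde \<Psi> (transpose F ** F)) has_derivative (\<lambda>H. Gt f' Ce \<bullet> (transpose Fe ** H + transpose H ** Fe))) (at Fe)"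
    unfolding Ce_def by (rule has_derivative_compose[OF CtC_deriv Wt_deriv[OF d p[unfolded Ce_def]]])
  moreover have "(\<lambda>H. Gt f' Ce \<bullet> (transpose Fe ** H + transpose H ** Fe)) = (\<lambda>H. (2 *\<^sub>R (Fe ** Gt f' Ce)) \<bullet> H)"
  proof (rule ext)
    fix H :: mat3
    have a: "Gt f' Ce \<bullet> (transpose H ** Fe) = (Fe ** Gt f' Ce) \<bullet> H"
      using inner_aux2[of "Gt f' Ce" H Fe] unfolding s .
    show "Gt f' Ce \<bullet> (transpose Fe ** H + transpose H ** Fe) = (2 *\<^sub>R (Fe ** Gt f' Ce)) \<bullet> H"
      using a inner_aux1[of "Gt f' Ce" Fe H] by (simp add: inner_add_right inner_scaleR_left del: inner_aux1)
  qed
  ultimately have "((\<lambda>F. Wtilde \<Psi> (transpose F ** F)) has_derivative (\<lambda>H. (2 *\<^sub>R (Fe ** Gt f' Ce)) \<bullet> H)) (at Fe)"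
    by simp
  then have "(W has_derivative (\<lambda>H. (2 *\<^sub>R (Fe ** Gt f' Ce)) \<bullet> H)) (at Fe)"
    by (rule has_derivative_transform_within_open[where s="{F. 0 < det F}"])
       (auto intro: open_Collect_less continuous_on_const det_cont simp: pos WP)
  then show ?thesis unfolding Ce_def by (rule grad_eq)
qed




lemma sym_of: fixes M :: mat3 assumes "transpose M = M" shows "sym M = M"
  using assms by (simp add: sym_def vec_eq_iff transpose_def)
lemma tr_conj: fixes P A :: mat3 shows "transpose (transpose P ** A ** P) = transpose P ** transpose A ** P"
  by (simp add: matrix_transpose_mul matrix_mul_assoc)

theorem mainTheorem8:
  fixes W :: "mat3 \<Rightarrow> real" and \<Psi> :: "real \<times> real \<times> real \<Rightarrow> real"
    and F Fp Up :: mat3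
  assumes Psi_C1: "C1_on posoct \<Psi>"
    and W_Psi: "\<And>Fe. det Fe > 0 \<Longrightarrow>
          W Fe = \<Psi> (I1 (transpose Fe ** Fe), I2 (transpose Fe ** Fe), I3 (transpose Fe ** Fe))"
    and W_obj_iso: "\<And>X Q R. det X > 0 \<Longrightarrow> Q \<in> SO3 \<Longrightarrow> R \<in> SO3 \<Longrightarrow> W (Q ** X ** R) = W X"
    and F_pos: "det F > 0" and Fp_pos: "det Fp > 0"
    and Up_sym: "transpose Up = Up"
    and Up_posdef: "\<And>x::real^3. x \<noteq> 0 \<Longrightarrow> x \<bullet> (Up *v x) > 0"
    and Up_sq: "Up ** Up = transpose Fp ** Fp"
  shows
   "let C = transpose F ** F; Cp = transpose Fp ** Fp; Fe = F ** matrix_inv Fp;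
        Rp = Fp ** matrix_inv Up;
        Sigma_e = transpose Fe ** grad W Fe;
        tau_e = grad W Fe ** transpose Fe;
        Sigma_t = 2 *\<^sub>R (C ** grad (Wtilde \<Psi>) (C ** matrix_inv Cp) ** matrix_inv Cp);
        Sigma_r = 2 *\<^sub>R (matrix_inv Up ** sym (C ** grad (Wtilde \<Psi>) (C ** matrix_inv Cp))
                          ** matrix_inv Up)
    in Sigma_r = transpose Rp ** Sigma_e ** Rp
     \<and> Sigma_r = matrix_inv Up ** Sigma_t ** Up
     \<and> Sigma_t = Up ** Sigma_r ** matrix_inv Up
     \<and> norm (dev3 Sigma_r) = norm (dev3 Sigma_e)
     \<and> trace (dev3 Sigma_t ** dev3 Sigma_t) = (norm (dev3 (matrix_inv Up ** Sigma_t ** Up)))\<^sup>2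
     \<and> (norm (dev3 (matrix_inv Up ** Sigma_t ** Up)))\<^sup>2 = (norm (dev3 Sigma_r))\<^sup>2
     \<and> (norm (dev3 Sigma_r))\<^sup>2 \<ge> 0
     \<and> sqrt (trace (dev3 Sigma_t ** dev3 Sigma_t)) = norm (dev3 Sigma_e)
     \<and> norm (dev3 Sigma_e) = norm (dev3 tau_e)"
proof -
  obtain f' where d: "\<forall>x\<in>posoct. (\<Psi> has_derivative blinfun_apply (f' x)) (at x)"
    using Psi_C1 unfolding C1_on_def by blast
  have WP: "\<And>Fe. det Fe > 0 \<Longrightarrow> W Fe = Wtilde \<Psi> (transpose Fe ** Fe)"
    using W_Psi by (simp add: Wtilde_def I1_def I2_def I3_def)
  have dF: "det F \<noteq> 0" using F_pos by simp
  have dFp: "det Fp \<noteq> 0" using Fp_pos by simp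
  have dUp: "det Up \<noteq> 0"
  proof -
    have "\<forall>x. Up *v x = 0 \<longrightarrow> x = 0" using Up_posdef by (metis inner_zero_right less_irrefl)
    then obtain B where "B ** Up = mat 1" using matrix_left_invertible_ker by blast
    then have "det B * det Up = 1" by (metis det_I det_mul)
    then show ?thesis by auto
  qed
  have iUs: "transpose (matrix_inv Up) = matrix_inv Up" using inv_transpose[OF dUp] Up_sym by simp
  have dP: "det (transpose Fp) \<noteq> 0" using dFp by simp
  have iP: "matrix_inv (transpose Fp) = transpose (matrix_inv Fp)" by (rule inv_transpose[OF dFp])
  have c1: "\<And>B::mat3. transpose Fp ** (transpose (matrix_inv Fp) ** B) = B"
    by (rule cancel1[OF dP, unfolded iP])
  have c2: "\<And>B::mat3. Fp ** (matrix_inv Fp ** B) = B" using cancel1[OF dFp] .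
  have c3: "\<And>B::mat3. matrix_inv Fp ** (Fp ** B) = B" using cancel2[OF dFp] .
  have c4: "\<And>B::mat3. Up ** (matrix_inv Up ** B) = B" using cancel1[OF dUp] .
  have c5: "\<And>B::mat3. matrix_inv Up ** (Up ** B) = B" using cancel2[OF dUp] .
  note r1 = inv_r[OF dUp] inv_l[OF dUp] inv_r[OF dFp] inv_l[OF dFp]
  define C where "C = transpose F ** F"
  define Cp where "Cp = transpose Fp ** Fp"
  define Fe where "Fe = F ** matrix_inv Fp"
  define Rp where "Rp = Fp ** matrix_inv Up"
  define Se where "Se = transpose Fe ** grad W Fe"
  define te where "te = grad W Fe ** transpose Fe"
  define St where "St = 2 *\<^sub>R (C ** grad (Wtilde \<Psi>) (C ** matrix_inv Cp) ** matrix_inv Cp)"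
  define Sr where "Sr = 2 *\<^sub>R (matrix_inv Up ** sym (C ** grad (Wtilde \<Psi>) (C ** matrix_inv Cp)) ** matrix_inv Up)"
  define Ce where "Ce = transpose Fe ** Fe"
  define G where "G = Gt f' Ce"
  have iCp: "matrix_inv Cp = matrix_inv Up ** matrix_inv Up"
    unfolding Cp_def Up_sq[symmetric] by (rule inv_mult[OF dUp dUp])
  have dFe: "det Fe > 0" unfolding Fe_def using F_pos Fp_pos by (simp add: det_mul det_inv dFp)
  have tFe: "transpose Fe = transpose (matrix_inv Fp) ** transpose F"
    unfolding Fe_def by (simp add: matrix_transpose_mul)
  have Cesym: "transpose Ce = Ce" unfolding Ce_def by (simp add: matrix_transpose_mul)
  have dCe: "det Ce \<noteq> 0" unfolding Ce_def using dFe by (simp add: det_mul)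
  have Gs: "transpose G = G" unfolding G_def by (rule Gt_sym[OF Cesym])
  have gW: "grad W Fe = 2 *\<^sub>R (Fe ** G)" unfolding G_def Ce_def by (rule W_grad[OF d WP dFe])
  have Xeq: "C ** matrix_inv Cp = transpose Fp ** Ce ** matrix_inv (transpose Fp)"
    unfolding C_def Cp_def Ce_def iP tFe Fe_def inv_mult[OF dP dFp]
    by (simp add: matrix_mul_assoc[symmetric] c1 iP matrix_transpose_mul)
  have GX: "Gt f' (C ** matrix_inv Cp) = matrix_inv Fp ** G ** Fp"
    unfolding Xeq G_def using Gt_sim[OF dP dCe, of f'] iP by simp
  have pX: "(trace (C ** matrix_inv Cp), trace (Cof (C ** matrix_inv Cp)), det (C ** matrix_inv Cp)) \<in> posoct"
    unfolding Xeq inv_sim[OF dP] unfolding Ce_def by (rule posoct_Ce) (use dFe in simp)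
  have gWt: "grad (Wtilde \<Psi>) (C ** matrix_inv Cp) = matrix_inv Fp ** G ** Fp"
    using grad_eq[OF Wt_deriv[OF d pX]] GX by simp
  have K2: "transpose (Ce ** G) = Ce ** G" unfolding G_def by (rule YGt[OF Cesym])
  have Ceq: "C = transpose Fp ** Ce ** Fp"
    unfolding C_def Ce_def tFe Fe_def by (simp add: matrix_mul_assoc[symmetric] c1 r1 matrix_transpose_mul)
  have K1: "C ** (matrix_inv Fp ** G ** Fp) = transpose Fp ** (Ce ** G) ** Fp"
    unfolding Ceq by (simp add: matrix_mul_assoc[symmetric] c2)
  have K1s: "sym (C ** (matrix_inv Fp ** G ** Fp)) = C ** (matrix_inv Fp ** G ** Fp)"
    unfolding K1 by (rule sym_of) (simp only: tr_conj K2)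
  have Se_eq: "Se = 2 *\<^sub>R (Ce ** G)" unfolding Se_def gW Ce_def by (simp add: sc_r matrix_mul_assoc)
  have te_eq: "te = 2 *\<^sub>R (Fe ** G ** transpose Fe)" unfolding te_def gW by (simp add: sc_l)
  have St_eq: "St = 2 *\<^sub>R (C ** (matrix_inv Fp ** G ** Fp) ** (matrix_inv Up ** matrix_inv Up))"
    unfolding St_def gWt unfolding iCp ..
  have Sr_eq: "Sr = 2 *\<^sub>R (matrix_inv Up ** (C ** (matrix_inv Fp ** G ** Fp)) ** matrix_inv Up)"
    unfolding Sr_def gWt K1s ..
  have Rp_o: "transpose Rp ** Rp = mat 1"
  proof -
    have "transpose Rp ** Rp = matrix_inv Up ** (transpose Fp ** Fp) ** matrix_inv Up"
      unfolding Rp_def by (simp add: matrix_transpose_mul iUs matrix_mul_assoc)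
    also have "\<dots> = mat 1" unfolding Up_sq[symmetric] by (simp add: matrix_mul_assoc[symmetric] c5 r1)
    finally show ?thesis .
  qed
  have Rp_inv: "matrix_inv (transpose Rp) = Rp"
    by (rule inv_unique) (use Rp_o matrix_left_right_inverse in blast)
  have dRt: "det (transpose Rp) \<noteq> 0" using Rp_o det_mul[of "transpose Rp" Rp] by auto
  have claim1: "Sr = transpose Rp ** Se ** Rp"
    unfolding Sr_eq Se_eq K1 Rp_def
    by (simp add: sc_l sc_r matrix_transpose_mul iUs matrix_mul_assoc[symmetric])
  have claim2: "Sr = matrix_inv Up ** St ** Up"
    unfolding Sr_eq St_eq by (simp add: sc_l sc_r matrix_mul_assoc[symmetric] r1)
  have claim3: "St = Up ** Sr ** matrix_inv Up"
    unfolding claim2 by (simp add: matrix_mul_assoc[symmetric] c4 r1)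
  have Ses: "transpose Se = Se" unfolding Se_eq by (simp add: transpose_scalar K2)
  have Srs: "transpose Sr = Sr"
    unfolding claim1 by (simp only: tr_conj Ses)
  have tes: "transpose te = te" unfolding te_eq by (simp add: transpose_scalar matrix_transpose_mul Gs matrix_mul_assoc)
  have Sr_sim: "Sr = transpose Rp ** Se ** matrix_inv (transpose Rp)" using claim1 Rp_inv by simp
  have t1: "trace Sr = trace Se" "trace (Sr ** Sr) = trace (Se ** Se)"
    unfolding Sr_sim by (simp_all add: trace_sim[OF dRt] sq_sim[OF dRt])
  have t2: "trace St = trace Sr" "trace (St ** St) = trace (Sr ** Sr)"
    unfolding claim3 by (simp_all add: trace_sim[OF dUp] sq_sim[OF dUp])
  have t3: "trace te = trace Se"
    unfolding te_eq Se_eq Ce_def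
    by (simp add: trace_sc matrix_mul_assoc[symmetric]) (metis trace_mul_sym matrix_mul_assoc)
  have t4: "trace (te ** te) = trace (Se ** Se)"
  proof -
    have "trace (te ** te) = 4 * trace (Fe ** (G ** transpose Fe ** Fe ** G ** transpose Fe))"
      unfolding te_eq by (simp add: sc_l sc_r trace_sc matrix_mul_assoc)
    also have "\<dots> = 4 * trace (G ** transpose Fe ** Fe ** G ** transpose Fe ** Fe)"
      using trace_mul_sym[of Fe "G ** transpose Fe ** Fe ** G ** transpose Fe"] by (simp add: matrix_mul_assoc)
    also have "\<dots> = 4 * trace (transpose Fe ** Fe ** (G ** transpose Fe ** Fe ** G))"
      using trace_mul_sym[of "G ** transpose Fe ** Fe ** G" "transpose Fe ** Fe"] by (simp add: matrix_mul_assoc)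
    also have "\<dots> = trace (Se ** Se)"
      unfolding Se_eq Ce_def by (simp add: sc_l sc_r trace_sc matrix_mul_assoc)
    finally show ?thesis .
  qed
  have n1: "norm (dev3 Sr) = norm (dev3 Se)"
    using dev_norm[OF Srs] dev_norm[OF Ses] t1 by (metis norm_ge_zero power2_eq_imp_eq)
  have n2: "norm (dev3 Se) = norm (dev3 te)"
    using dev_norm[OF tes] dev_norm[OF Ses] t3 t4 by (metis norm_ge_zero power2_eq_imp_eq)
  have n3: "trace (dev3 St ** dev3 St) = (norm (dev3 (matrix_inv Up ** St ** Up)))\<^sup>2"
    using dev_tr[of St] dev_norm[OF Srs] t2 claim2 by simp
  have main: "Sr = transpose Rp ** Se ** Rp
     \<and> Sr = matrix_inv Up ** St ** Up
     \<and> St = Up ** Sr ** matrix_inv Up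
     \<and> norm (dev3 Sr) = norm (dev3 Se)
     \<and> trace (dev3 St ** dev3 St) = (norm (dev3 (matrix_inv Up ** St ** Up)))\<^sup>2
     \<and> (norm (dev3 (matrix_inv Up ** St ** Up)))\<^sup>2 = (norm (dev3 Sr))\<^sup>2
     \<and> (norm (dev3 Sr))\<^sup>2 \<ge> 0
     \<and> sqrt (trace (dev3 St ** dev3 St)) = norm (dev3 Se)
     \<and> norm (dev3 Se) = norm (dev3 te)"
  proof -
    have e6: "(norm (dev3 (matrix_inv Up ** St ** Up)))\<^sup>2 = (norm (dev3 Sr))\<^sup>2"
      by (simp only: claim2[symmetric])
    have e8: "sqrt (trace (dev3 St ** dev3 St)) = norm (dev3 Se)"
      unfolding n3 e6 by (simp add: n1)
    show ?thesis by (intro conjI claim1 claim2 claim3 n1 n3 e6 e8 n2 zero_le_power2)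
  qed
  show ?thesis unfolding Let_def
    using main unfolding Sr_def St_def Se_def te_def Rp_def Fe_def Cp_def C_def .
qed


end
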